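(* Let $p$ and $p'$ be consecutive patterns of the same length $r$ that are non-overlapping, mutually non-overlapping, and interchangeable. Then for all $n$ and all $S,T\subseteq[n]$, $$|\{e\in\mathbf{I}_n:\mathrm{Em}(p,e)=S,\ \mathrm{Em}(p',e)=T\}|=|\{e\in\mathbf{I}_n:\mathrm{Em}(p,e)=T,\ \mathrm{Em}(p',e)=S\}|.$$ In particular, $p$ and $p'$ are super-strongly Wilf equivalent.
   Context: An inversion sequence of length $n$ is an integer sequence $e=e_1e_2\dots e_n$ with $0\le e_i<i$ for all $i$; $\mathbf{I}_n$ denotes the set of these. A pattern of length $r$ is a sequence $p=p_1\dots p_r$ with $p_i\in\{0,\dots,r-1\}$ such that whenever a value $j>0$ appears in $p$, the value $j-1$ also appears. The reduction of an integer word $w$ is obtained by replacing every occurrence of the $i$-th smallest distinct value of $w$ by $i-1$. An inversion sequence $e$ has an occurrence of the consecutive pattern $p$ in position $i$ if the reduction of $e_i\dots e_{i+r-1}$ equals $p$; $\mathrm{Em}(p,e)$ is the set of such positions. $p=p_1\dots p_r$ is non-overlapping if for every $1<i<r$ the reductions of $p_1\dots p_i$ and $p_{r-i+1}\dots p_r$ differ. $p,p'$ (both of length $r$) are mutually non-overlapping if for every $1<i<r$ the reductions of $p_1\dots p_i$ and $p'_{r-i+1}\dots p'_r$ differ, and the reductions of $p'_1\dots p'_i$ and $p_{r-i+1}\dots p_r$ differ. Given patterns $p,p'$ of length $r$ with $p_1=p'_1$, $p_r=p'_r$ and $\max_i p_i=\max_i p'_i$, $p$ is changeable for $p'$ if for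 all $1\le i\le r$, $p'_i\le\max(\{p_j:1\le j\le i\}\cup\{p_j-j+i: i<j\le r\})$; $p$ and $p'$ are interchangeable if each is changeable for the other. Two patterns are super-strongly Wilf equivalent if $|\{e\in\mathbf{I}_n:\mathrm{Em}(p,e)=T\}|=|\{e\in\mathbf{I}_n:\mathrm{Em}(p',e)=T\}|$ for all $n$ and all $T\subseteq[n]$. *)

theory Defs
  imports Main
begin

text \<open>Words and sequences are lists of naturals; list index k (0-based) corresponds to
  the paper's index k+1. Positions of occurrences are reported 1-based, as subsets of [n].\<close>

definition inv_seqs :: "nat \<Rightarrow> nat list set" where
  "inv_seqs n = {e. length e = n \<and> (\<forall>i<n. e ! i < i + 1)}"

definition is_pattern :: "nat list \<Rightarrow> nat \<Rightarrow> bool" where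
  "is_pattern p r \<longleftrightarrow> length p = r \<and> (\<forall>x\<in>set p. x < r)
     \<and> (\<forall>j\<in>set p. j > 0 \<longrightarrow> j - 1 \<in> set p)"

definition red :: "nat list \<Rightarrow> nat list" where
  "red w = map (\<lambda>x. card {y \<in> set w. y < x}) w"

definition Em :: "nat list \<Rightarrow> nat list \<Rightarrow> nat set" where
  "Em p e = {i. 1 \<le> i \<and> i + length p \<le> length e + 1
                \<and> red (take (length p) (drop (i - 1) e)) = p}"

definition non_overlapping :: "nat list \<Rightarrow> bool" where
  "non_overlapping p \<longleftrightarrow>
     (\<forall>i. 1 < i \<and> i < length p \<longrightarrow> red (take i p) \<noteq> red (drop (length p - i) p))"

definition mutually_non_overlapping :: "nat list \<Rightarrow> nat list \<Rightarrow> bool" where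
  "mutually_non_overlapping p q \<longleftrightarrow> length p = length q \<and>
     (\<forall>i. 1 < i \<and> i < length p \<longrightarrow>
        red (take i p) \<noteq> red (drop (length q - i) q) \<and>
        red (take i q) \<noteq> red (drop (length p - i) p))"

text \<open>Changeability, including the standing requirements p_1 = p'_1, p_r = p'_r and equal
  maxima; the bound uses integers since p_j - j + i may be negative.\<close>
definition changeable :: "nat list \<Rightarrow> nat list \<Rightarrow> bool" where
  "changeable p q \<longleftrightarrow> length p = length q \<and> p \<noteq> [] \<and>
     hd p = hd q \<and> last p = last q \<and> Max (set p) = Max (set q) \<and>
     (\<forall>i < length p. int (q ! i) \<le>
        Max ({int (p ! j) | j. j \<le> i} \<union>
             {int (p ! j) - int j + int i | j. i < j \<and> j < length p}))"

definition interchangeable :: "nat list \<Rightarrow> nat list \<Rightarrow> bool" where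
  "interchangeable p q \<longleftrightarrow> changeable p q \<and> changeable q p"

definition super_strongly_wilf_equiv :: "nat list \<Rightarrow> nat list \<Rightarrow> bool" where
  "super_strongly_wilf_equiv p q \<longleftrightarrow>
     (\<forall>n T. T \<subseteq> {1..n} \<longrightarrow>
        card {e \<in> inv_seqs n. Em p e = T} = card {e \<in> inv_seqs n. Em q e = T})"

end

theory Submission imports Defs begin
definition rk :: "nat list \<Rightarrow> nat \<Rightarrow> nat" where "rk w x = card {y \<in> set w. y < x}"

lemma red_eq: "red w = map (rk w) w" by (simp add: red_def rk_def)

lemma rk_mono: assumes "x \<in> set w" "x < x'" shows "rk w x < rk w x'"
  unfolding rk_def by (rule psubset_card_mono) (use assms in auto)

lemma smono_inj: assumes "\<forall>x\<in>A. \<forall>y\<in>A. x < y \<longrightarrow> f x < (f y::nat)" shows "inj_on f (A::nat set)"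
proof (rule inj_onI)
  fix x y assume "x \<in> A" "y \<in> A" "f x = f y"
  then show "x = y" using assms by (metis less_irrefl linorder_neqE_nat)
qed

lemma red_map: assumes "\<forall>x\<in>set w. \<forall>y\<in>set w. x < y \<longrightarrow> f x < f y"
  shows "red (map f w) = red w"
proof -
  have "card {y \<in> f ` set w. y < f x} = card {y \<in> set w. y < x}" if "x \<in> set w" for x
  proof -
    have "{y \<in> f ` set w. y < f x} = f ` {y \<in> set w. y < x}"
    proof
      show "{y \<in> f ` set w. y < f x} \<subseteq> f ` {y \<in> set w. y < x}"
      proof
        fix y assume "y \<in> {y \<in> f ` set w. y < f x}"
        then obtain z where z: "z \<in> set w" "y = f z" "f z < f x" by auto
        have "z < x"
        proof (rule ccontr)
          assume "\<not> z < x"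
          then have "x < z \<or> x = z" by auto
          then show False using z assms that by force
        qed
        then show "y \<in> f ` {y \<in> set w. y < x}" using z by auto
      qed
      show "f ` {y \<in> set w. y < x} \<subseteq> {y \<in> f ` set w. y < f x}"
        using assms that by auto
    qed
    moreover have "inj_on f {y \<in> set w. y < x}"
      using smono_inj[OF assms] by (rule inj_on_subset) auto
    ultimately show ?thesis by (simp add: card_image)
  qed
  then show ?thesis by (simp add: red_def)
qed

lemma red_sub: assumes "set u \<subseteq> set w" shows "red (map (rk w) u) = red u"
  using assms by (intro red_map) (auto intro: rk_mono)

lemma red_take: "red (take i (red w)) = red (take i w)"
  by (simp only: red_eq[of w] take_map) (rule red_sub[OF set_take_subset])
lemma red_drop: "red (drop i (red w)) = red (drop i w)"
  by (simp only: red_eq[of w] drop_map) (rule red_sub[OF set_drop_subset])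

lemma set_red: "set (red w) = {0..<card (set w)}"
proof -
  have inj: "inj_on (rk w) (set w)"
    by (rule smono_inj) (auto intro: rk_mono)
  have sub: "rk w ` set w \<subseteq> {0..<card (set w)}"
  proof
    fix z assume "z \<in> rk w ` set w"
    then obtain x where x: "x \<in> set w" "z = rk w x" by auto
    have "{y \<in> set w. y < x} \<subset> set w" using x by auto
    then show "z \<in> {0..<card (set w)}" using x by (simp add: rk_def psubset_card_mono)
  qed
  have "card (rk w ` set w) = card {0..<card (set w)}" using inj by (simp add: card_image)
  then have "rk w ` set w = {0..<card (set w)}" using sub by (simp add: card_subset_eq)
  then show ?thesis by (simp add: red_eq)
qed

lemma take_rank: fixes xs :: "nat list" assumes "sorted_wrt (<) xs" "i < length xs"
  shows "{y \<in> set xs. y < xs ! i} = set (take i xs)"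
proof -
  have "y \<in> set (take i xs) \<longleftrightarrow> y \<in> set xs \<and> y < xs ! i" for y
  proof
    assume "y \<in> set (take i xs)"
    then obtain j where "j < i" "y = xs ! j" by (auto simp: in_set_conv_nth)
    then show "y \<in> set xs \<and> y < xs ! i" using assms
      by (metis in_set_conv_nth order.strict_trans sorted_wrt_nth_less)
  next
    assume "y \<in> set xs \<and> y < xs ! i"
    then obtain j where j: "j < length xs" "y = xs ! j" "y < xs ! i" by (auto simp: in_set_conv_nth)
    have "j < i"
    proof (rule ccontr)
      assume "\<not> j < i"
      then have "i \<le> j" by simp
      have "xs ! i \<le> xs ! j"
      proof (cases "i = j")
        case True then show ?thesis by simp
      next
        case False then show ?thesis using assms j \<open>i \<le> j\<close>
          by (simp add: less_imp_le sorted_wrt_nth_less)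
      qed
      then show False using j by simp
    qed
    then show "y \<in> set (take i xs)" using j assms by (auto simp: in_set_conv_nth)
  qed
  then show ?thesis by auto
qed

definition vs :: "nat list \<Rightarrow> nat list" where "vs w = sorted_list_of_set (set w)"

lemma vs_sorted: "sorted_wrt (<) (vs w)" by (simp add: vs_def strict_sorted_list_of_set)
lemma vs_set: "set (vs w) = set w" by (simp add: vs_def)
lemma vs_len: "length (vs w) = card (set w)" by (simp add: vs_def length_sorted_list_of_set)

lemma vs_red: assumes "k < length w" shows "vs w ! (red w ! k) = w ! k"
proof -
  have "w ! k \<in> set (vs w)" using assms vs_set by auto
  then obtain i where i: "i < length (vs w)" "vs w ! i = w ! k" by (auto simp: in_set_conv_nth)
  have "red w ! k = card {y \<in> set w. y < w ! k}" using assms by (simp add: red_def)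
  also have "{y \<in> set w. y < w ! k} = set (take i (vs w))"
    using take_rank[OF vs_sorted i(1)] i vs_set by metis
  also have "card \<dots> = i" using i vs_sorted
    by (simp add: distinct_card strict_sorted_iff)
  finally show ?thesis using i by simp
qed

lemma red_id: assumes "set P = {0..<m}" shows "red P = P"
proof -
  have "card {y \<in> set P. y < x} = x" if "x \<in> set P" for x
  proof -
    have "{y \<in> set P. y < x} = {0..<x}" using assms that by auto
    then show ?thesis by simp
  qed
  then show ?thesis unfolding red_def by (simp add: map_idI)
qed

lemma red_vsmap: assumes "sorted_wrt (<) xs" "set P \<subseteq> {0..<length xs}"
  shows "red (map (\<lambda>c. xs ! c) P) = red P"
  apply (intro red_map ballI impI)
  apply (rule sorted_wrt_nth_less[OF assms(1)])
  using assms(2) by auto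

lemma gap: assumes "sorted_wrt (<) (xs::nat list)" "i \<le> j" "j < length xs"
  shows "xs ! i + (j - i) \<le> xs ! j"
  using assms(2,3)
proof (induction j)
  case 0 then show ?case by simp
next
  case (Suc j)
  show ?case
  proof (cases "i = Suc j")
    case True then show ?thesis by simp
  next
    case False
    then have "i \<le> j" using Suc by simp
    then have "xs ! i + (j - i) \<le> xs ! j" using Suc by simp
    moreover have "xs ! j < xs ! Suc j" using assms(1) Suc by (simp add: sorted_wrt_nth_less)
    ultimately show ?thesis using \<open>i \<le> j\<close> by simp
  qed
qed

lemma down_aux: fixes S :: "nat set" assumes "\<forall>j\<in>S. j > 0 \<longrightarrow> j - 1 \<in> S"
  shows "x \<in> S \<Longrightarrow> y \<le> x \<Longrightarrow> y \<in> S"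
proof (induction x)
  case 0 then show ?case by simp
next
  case (Suc x)
  show ?case
  proof (cases "y = Suc x")
    case True then show ?thesis using Suc.prems by simp
  next
    case False
    have "x \<in> S" using assms Suc.prems(1) by fastforce
    then show ?thesis using Suc False by simp
  qed
qed

lemma down_closed: fixes S :: "nat set" assumes "finite S" "S \<noteq> {}" "\<forall>j\<in>S. j > 0 \<longrightarrow> j - 1 \<in> S"
  shows "S = {0..Max S}"
proof -
  have "y \<in> S" if "y \<le> Max S" for y
    using down_aux[OF assms(3) Max_in[OF assms(1,2)] that] .
  moreover have "x \<le> Max S" if "x \<in> S" for x using Max_ge[OF assms(1) that] .
  ultimately show ?thesis by auto
qed



definition W :: "nat \<Rightarrow> nat list \<Rightarrow> nat \<Rightarrow> nat list" where
  "W r e a = take r (drop a e)"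
definition occ :: "nat list \<Rightarrow> nat list \<Rightarrow> nat list \<Rightarrow> nat \<Rightarrow> bool" where
  "occ p q e a \<longleftrightarrow> a + length p \<le> length e \<and> (red (W (length p) e a) = p \<or> red (W (length p) e a) = q)"
definition oth :: "nat list \<Rightarrow> nat list \<Rightarrow> nat list \<Rightarrow> nat list" where
  "oth p q P = (if P = p then q else p)"
definition inner :: "nat list \<Rightarrow> nat list \<Rightarrow> nat list \<Rightarrow> nat \<Rightarrow> nat \<Rightarrow> bool" where
  "inner p q e k a \<longleftrightarrow> occ p q e a \<and> a < k \<and> k + 1 < a + length p"
definition gmap :: "nat list \<Rightarrow> nat list \<Rightarrow> nat list \<Rightarrow> nat list" where
  "gmap p q e = map (\<lambda>k. if \<exists>a. inner p q e k a then
      (let a = (SOME a. inner p q e k a) in vs (W (length p) e a) ! (oth p q (red (W (length p) e a)) ! (k - a)))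
      else e ! k) [0..<length e]"

lemma W_len: "a + r \<le> length e \<Longrightarrow> length (W r e a) = r"
  by (simp add: W_def)
lemma W_nth: "a + r \<le> length e \<Longrightarrow> c < r \<Longrightarrow> W r e a ! c = e ! (a + c)"
  by (simp add: W_def)

lemma Em_char: "length P = r \<Longrightarrow> Em P e = Suc ` {a. a + r \<le> length e \<and> red (W r e a) = P}"
proof -
  assume r: "length P = r"
  have "x \<in> Em P e \<longleftrightarrow> x \<in> Suc ` {a. a + r \<le> length e \<and> red (W r e a) = P}" for x
  proof (cases x)
    case 0 then show ?thesis by (auto simp: Em_def)
  next
    case (Suc a) then show ?thesis using r by (auto simp: Em_def W_def)
  qed
  then show ?thesis by blast
qed

locale setting =
  fixes p q :: "nat list"
  assumes lenq: "length q = length p" and pne: "p \<noteq> []"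
    and setpq: "set p = set q"
    and first: "q ! 0 = p ! 0" and lst: "q ! (length p - 1) = p ! (length p - 1)"
    and nov_p: "non_overlapping p" and nov_q: "non_overlapping q"
    and mnov: "mutually_non_overlapping p q"
    and chpq: "changeable p q" and chqp: "changeable q p"
begin

abbreviation "r \<equiv> length p"

lemma dist: assumes "occ p q e a" "occ p q e b" "a < b" shows "a + r \<le> b + 1"
proof (rule ccontr)
  assume "\<not> a + r \<le> b + 1"
  define d where "d = b - a"
  define ov where "ov = r - d"
  have d: "b = a + d" "0 < d" using assms(3) d_def by auto
  have ov: "1 < ov" "ov < r" "d = r - ov" using \<open>\<not> a + r \<le> b + 1\<close> d ov_def by auto
  have lb: "b + r \<le> length e" and la: "a + r \<le> length e" using assms by (auto simp: occ_def)
  have "drop d (W r e a) = take ov (W r e b)"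
    unfolding W_def using d ov by (simp add: drop_take take_take drop_drop min_def add.commute)
  then have eq: "red (drop (r - ov) (red (W r e a))) = red (take ov (red (W r e b)))"
    by (simp add: red_take red_drop ov(3)[symmetric])
  have P: "red (W r e a) = p \<or> red (W r e a) = q" and Q: "red (W r e b) = p \<or> red (W r e b) = q"
    using assms by (auto simp: occ_def)
  have n1: "red (take ov p) \<noteq> red (drop (r - ov) p)" using nov_p ov by (simp add: non_overlapping_def)
  have n2: "red (take ov q) \<noteq> red (drop (r - ov) q)" using nov_q ov lenq by (simp add: non_overlapping_def)
  have n3: "red (take ov p) \<noteq> red (drop (r - ov) q)" "red (take ov q) \<noteq> red (drop (r - ov) p)"
    using mnov ov lenq by (simp_all add: mutually_non_overlapping_def)
  show False using P Q eq n1 n2 n3 by auto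
qed


lemma occ_len: "occ p q e a \<Longrightarrow> a + r \<le> length e" by (simp add: occ_def)
lemma occ_red: "occ p q e a \<Longrightarrow> red (W r e a) = p \<or> red (W r e a) = q" by (simp add: occ_def)

lemma oth_in: "oth p q P = p \<or> oth p q P = q" by (simp add: oth_def)
lemma oth_oth: "P = p \<or> P = q \<Longrightarrow> oth p q (oth p q P) = P" by (auto simp: oth_def)
lemma len_pq: "P = p \<or> P = q \<Longrightarrow> length P = r" using lenq by auto

lemma oth_end: assumes "P = p \<or> P = q" "c = 0 \<or> c = r - 1" shows "oth p q P ! c = P ! c"
  using assms first lst by (auto simp: oth_def)

lemma occ_win: "occ p q e a \<Longrightarrow> c < r \<Longrightarrow> e ! (a + c) = vs (W r e a) ! (red (W r e a) ! c)"
  using vs_red[of c "W r e a"] W_nth[of a r e c] W_len[of a r e] occ_len by simp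

lemma set_P: assumes "occ p q e a" "P = p \<or> P = q"
  shows "set P = {0..<length (vs (W r e a))}"
proof -
  have "set (red (W r e a)) = {0..<length (vs (W r e a))}" by (simp add: set_red vs_len)
  then show ?thesis using occ_red[OF assms(1)] assms(2) setpq by auto
qed

lemma inner_unique: assumes "inner p q e k a" "inner p q e k b" shows "a = b"
proof (rule ccontr)
  assume "a \<noteq> b"
  then have "a < b \<or> b < a" by auto
  then show False
  proof
    assume ab: "a < b" have "occ p q e a" "occ p q e b" using assms by (auto simp: inner_def)
    then have "a + r \<le> b + 1" using dist ab by blast
    then show False using assms by (auto simp: inner_def)
  next
    assume ab: "b < a" have "occ p q e a" "occ p q e b" using assms by (auto simp: inner_def)
    then have "b + r \<le> a + 1" using dist ab by blast
    then show False using assms by (auto simp: inner_def)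
  qed
qed

lemma g_len: "length (gmap p q e) = length e" by (simp add: gmap_def)

lemma g_inner: assumes "inner p q e k a"
  shows "gmap p q e ! k = vs (W r e a) ! (oth p q (red (W r e a)) ! (k - a))"
proof -
  have k: "k < length e" using assms by (auto simp: inner_def occ_def)
  have "(SOME a. inner p q e k a) = a"
    by (rule some_equality[where P="inner p q e k", OF assms]) (rule inner_unique[OF _ assms])
  then show ?thesis using assms k by (auto simp: gmap_def Let_def)
qed

lemma g_other: assumes "\<not> (\<exists>a. inner p q e k a)" "k < length e" shows "gmap p q e ! k = e ! k"
  using assms by (auto simp: gmap_def)

lemma W_g: assumes "occ p q e a"
  shows "W r (gmap p q e) a = map (\<lambda>c. vs (W r e a) ! c) (oth p q (red (W r e a)))"
proof (rule nth_equalityI)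
  have la: "a + r \<le> length e" using occ_len[OF assms] .
  show "length (W r (gmap p q e) a) = length (map (\<lambda>c. vs (W r e a) ! c) (oth p q (red (W r e a))))"
    using la W_len[of a r "gmap p q e"] g_len len_pq[OF oth_in] by simp
  fix c assume "c < length (W r (gmap p q e) a)"
  then have c: "c < r" using la W_len[of a r "gmap p q e"] g_len by simp
  have lhs: "W r (gmap p q e) a ! c = gmap p q e ! (a + c)" using W_nth[of a r "gmap p q e" c] la c g_len by simp
  have rl: "length (oth p q (red (W r e a))) = r" using len_pq[OF oth_in] .
  show "W r (gmap p q e) a ! c = map (\<lambda>c. vs (W r e a) ! c) (oth p q (red (W r e a))) ! c"
  proof (cases "0 < c \<and> c + 1 < r")
    case True
    then have "inner p q e (a + c) a" using assms by (simp add: inner_def)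
    then show ?thesis using lhs g_inner rl c by simp
  next
    case False
    have no: "\<not> (\<exists>a'. inner p q e (a + c) a')"
    proof
      assume "\<exists>a'. inner p q e (a + c) a'"
      then obtain a' where a': "inner p q e (a + c) a'" by blast
      then have o: "occ p q e a'" "a' < a + c" "a + c + 1 < a' + r" by (auto simp: inner_def)
      consider "a' = a" | "a < a'" | "a' < a" by linarith
      then show False
      proof cases
        case 1 then show False using o False by simp
      next
        case 2 then have "a + r \<le> a' + 1" using dist[OF assms o(1)] by simp
        then show False using o c by simp
      next
        case 3 then have "a' + r \<le> a + 1" using dist[OF o(1) assms] by simp
        then show False using o by simp
      qed
    qed
    have "c = 0 \<or> c = r - 1" using False c by auto
    then have "oth p q (red (W r e a)) ! c = red (W r e a) ! c" using oth_end occ_red[OF assms] by blast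
    then show ?thesis using lhs g_other[OF no] la c rl occ_win[OF assms c] by simp
  qed
qed

lemma red_W_g: assumes "occ p q e a"
  shows "red (W r (gmap p q e) a) = oth p q (red (W r e a))"
proof -
  have s: "set (oth p q (red (W r e a))) = {0..<length (vs (W r e a))}"
    using set_P[OF assms oth_in] .
  show ?thesis unfolding W_g[OF assms]
    using red_vsmap[OF vs_sorted, of "oth p q (red (W r e a))"] red_id[OF s] s by simp
qed

lemma red_g: assumes "a + r \<le> length e"
  shows "(red (W r (gmap p q e) a) = q \<longleftrightarrow> red (W r e a) = p) \<and>
         (red (W r (gmap p q e) a) = p \<longleftrightarrow> red (W r e a) = q)"
proof (cases "occ p q e a")
  case True
  then show ?thesis using red_W_g[OF True] occ_red[OF True] by (auto simp: oth_def)
next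
  case False
  have "\<not> occ p q (gmap p q e) a"
  proof
    assume og: "occ p q (gmap p q e) a"
    have "W r (gmap p q e) a = W r e a"
    proof (rule nth_equalityI)
      show "length (W r (gmap p q e) a) = length (W r e a)" using assms g_len by (simp add: W_len)
      fix c assume "c < length (W r (gmap p q e) a)"
      then have c: "c < r" using assms g_len by (simp add: W_len)
      have "gmap p q e ! (a + c) = e ! (a + c)"
      proof (cases "\<exists>a'. inner p q e (a + c) a'")
        case True
        then obtain a' where a': "inner p q e (a + c) a'" by blast
        then have o: "occ p q e a'" "a' < a + c" "a + c + 1 < a' + r" by (auto simp: inner_def)
        have "a' \<noteq> a" using o False by auto
        have o': "occ p q (gmap p q e) a'"
          using red_W_g[OF o(1)] oth_in occ_len[OF o(1)] g_len by (simp add: occ_def)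
        consider "a < a'" | "a' < a" using \<open>a' \<noteq> a\<close> by linarith
        then show ?thesis
        proof cases
          case 1 then have "a + r \<le> a' + 1" using dist[OF og o'] by simp
          then show ?thesis using o c by simp
        next
          case 2 then have "a' + r \<le> a + 1" using dist[OF o' og] by simp
          then show ?thesis using o by simp
        qed
      next
        case False then show ?thesis using g_other assms c by simp
      qed
      then show "W r (gmap p q e) a ! c = W r e a ! c"
        using assms c g_len by (simp add: W_nth)
    qed
    then show False using og False assms g_len by (simp add: occ_def)
  qed
  then show ?thesis using False assms g_len by (auto simp: occ_def)
qed

lemma occ_g: "occ p q (gmap p q e) a \<longleftrightarrow> occ p q e a"
proof (cases "a + r \<le> length e")
  case True then show ?thesis using red_g[OF True] g_len by (auto simp: occ_def)
next
  case False then show ?thesis using g_len by (simp add: occ_def)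
qed

lemma inner_g: "inner p q (gmap p q e) k a \<longleftrightarrow> inner p q e k a"
  by (simp add: inner_def occ_g)

lemma gg: "gmap p q (gmap p q e) = e"
proof (rule nth_equalityI)
  show "length (gmap p q (gmap p q e)) = length e" by (simp add: g_len)
  fix k assume "k < length (gmap p q (gmap p q e))"
  then have k: "k < length e" by (simp add: g_len)
  show "gmap p q (gmap p q e) ! k = e ! k"
  proof (cases "\<exists>a. inner p q e k a")
    case True
    then obtain a where a: "inner p q e k a" by blast
    then have o: "occ p q e a" and ka: "a < k" "k + 1 < a + r" by (auto simp: inner_def)
    let ?P = "red (W r e a)"
    have sP: "set (oth p q ?P) = {0..<length (vs (W r e a))}" using set_P[OF o oth_in] .
    have "set (W r (gmap p q e) a) = (\<lambda>c. vs (W r e a) ! c) ` {0..<length (vs (W r e a))}"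
      unfolding W_g[OF o] using sP by simp
    also have "\<dots> = set (vs (W r e a))" by (auto simp: in_set_conv_nth)
    also have "\<dots> = set (W r e a)" by (rule vs_set)
    finally have "vs (W r (gmap p q e) a) = vs (W r e a)" by (simp add: vs_def)
    moreover have "oth p q (red (W r (gmap p q e) a)) = ?P"
      using red_W_g[OF o] oth_oth[OF occ_red[OF o]] by simp
    moreover have "gmap p q (gmap p q e) ! k = vs (W r (gmap p q e) a) ! (oth p q (red (W r (gmap p q e) a)) ! (k - a))"
      using g_inner a inner_g by blast
    ultimately have "gmap p q (gmap p q e) ! k = vs (W r e a) ! (?P ! (k - a))" by simp
    also have "\<dots> = e ! (a + (k - a))" using occ_win[OF o, of "k - a"] ka by simp
    finally show ?thesis using ka by simp
  next
    case False
    then have "\<not> (\<exists>a. inner p q (gmap p q e) k a)" using inner_g by blast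
    then show ?thesis using g_other False k g_len by simp
  qed
qed


lemma g_inv: assumes "e \<in> inv_seqs n" shows "gmap p q e \<in> inv_seqs n"
proof -
  have len: "length e = n" and ev: "\<forall>i<n. e ! i < i + 1" using assms by (auto simp: inv_seqs_def)
  have "gmap p q e ! k \<le> k" if k: "k < n" for k
  proof (cases "\<exists>a. inner p q e k a")
    case False then show ?thesis using g_other[OF False] ev k len by fastforce
  next
    case True
    then obtain a where a: "inner p q e k a" by blast
    then have o: "occ p q e a" and ka: "a < k" "k + 1 < a + r" by (auto simp: inner_def)
    define c where "c = k - a"
    have kc: "k = a + c" "c < r" using ka c_def by auto
    define P where "P = red (W r e a)"
    define v where "v = vs (W r e a)"
    define Q where "Q = oth p q P"
    have gk: "gmap p q e ! k = v ! (Q ! c)" using g_inner[OF a] by (simp add: P_def v_def Q_def c_def)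
    have Pin: "P = p \<or> P = q" using occ_red[OF o] P_def by simp
    have sP: "set P = {0..<length v}" using set_P[OF o Pin] v_def by simp
    have sQ: "set Q = {0..<length v}" using set_P[OF o oth_in] v_def Q_def by simp
    have lP: "length P = r" using len_pq[OF Pin] .
    have lQ: "length Q = r" unfolding Q_def using len_pq[OF oth_in] .
    have la: "a + r \<le> n" using occ_len[OF o] len by simp
    have ent: "v ! (P ! j) \<le> a + j" if "j < r" for j
    proof -
      have "e ! (a + j) = v ! (P ! j)" using occ_win[OF o that] P_def v_def by simp
      moreover have "e ! (a + j) < a + j + 1" using ev la that by simp
      ultimately show ?thesis by simp
    qed
    have Pj: "P ! j < length v" if "j < r" for j using sP lP that nth_mem by fastforce
    have Qc: "Q ! c < length v" using sQ lQ kc nth_mem by fastforce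
    have mono: "v ! x \<le> v ! y" if "x \<le> y" "y < length v" for x y
      using gap[OF vs_sorted[of "W r e a"]] that v_def by fastforce
    show ?thesis
    proof (cases "Q = P")
      case True then show ?thesis using gk ent[OF kc(2)] kc by simp
    next
      case False
      have ch: "changeable P Q"
      proof (cases "P = p")
        case True then show ?thesis using chpq Q_def by (simp add: oth_def)
      next
        case False then have "P = q" "Q = p" using Pin Q_def by (auto simp: oth_def)
        then show ?thesis using chqp by simp
      qed
      define A where "A = {int (P ! j) | j. j \<le> c}"
      define B where "B = {int (P ! j) - int j + int c | j. c < j \<and> j < length P}"
      have bound: "int (Q ! c) \<le> Max (A \<union> B)"
        using ch kc lP unfolding changeable_def A_def B_def by auto
      have "A = (\<lambda>j. int (P ! j)) ` {..c}" unfolding A_def by auto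
      moreover have "B = (\<lambda>j. int (P ! j) - int j + int c) ` {c<..<length P}" unfolding B_def by auto
      ultimately have fin: "finite (A \<union> B)" by simp
      have ne: "A \<union> B \<noteq> {}" unfolding A_def by auto
      obtain m where m: "m \<in> A \<union> B" "int (Q ! c) \<le> m" using Max_in[OF fin ne] bound by blast
      show ?thesis
      proof (cases "m \<in> A")
        case True
        then obtain j where j: "j \<le> c" "m = int (P ! j)" unfolding A_def by auto
        have "v ! (Q ! c) \<le> v ! (P ! j)" using mono j m Pj kc by simp
        then show ?thesis using gk ent[of j] j kc by simp
      next
        case False
        then have "m \<in> B" using m by simp
        then obtain j where j: "c < j" "j < r" "m = int (P ! j) - int j + int c" unfolding B_def using lP by auto
        have ineq: "Q ! c + j \<le> P ! j + c" using m j by simp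
        have "v ! (Q ! c) + (P ! j - Q ! c) \<le> v ! (P ! j)"
          using gap[OF vs_sorted[of "W r e a"], of "Q ! c" "P ! j"] ineq j Pj v_def by simp
        then show ?thesis using gk ent[OF j(2)] ineq j kc by linarith
      qed
    qed
  qed
  then show ?thesis using g_len len by (auto simp: inv_seqs_def less_Suc_eq_le)
qed

lemma Em_g1: "Em q (gmap p q e) = Em p e"
proof -
  have "{a. a + r \<le> length (gmap p q e) \<and> red (W r (gmap p q e) a) = q} = {a. a + r \<le> length e \<and> red (W r e a) = p}"
  proof (rule Collect_cong)
    fix a show "(a + r \<le> length (gmap p q e) \<and> red (W r (gmap p q e) a) = q) = (a + r \<le> length e \<and> red (W r e a) = p)"
    proof (cases "a + r \<le> length e")
      case True then show ?thesis using red_g[OF True] g_len by simp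
    next
      case False then show ?thesis using g_len by simp
    qed
  qed
  then show ?thesis using Em_char[of q r] Em_char[of p r] lenq by simp
qed

lemma Em_g2: "Em p (gmap p q e) = Em q e"
proof -
  have "{a. a + r \<le> length (gmap p q e) \<and> red (W r (gmap p q e) a) = p} = {a. a + r \<le> length e \<and> red (W r e a) = q}"
  proof (rule Collect_cong)
    fix a show "(a + r \<le> length (gmap p q e) \<and> red (W r (gmap p q e) a) = p) = (a + r \<le> length e \<and> red (W r e a) = q)"
    proof (cases "a + r \<le> length e")
      case True then show ?thesis using red_g[OF True] g_len by simp
    next
      case False then show ?thesis using g_len by simp
    qed
  qed
  then show ?thesis using Em_char[of q r] Em_char[of p r] lenq by simp
qed

lemma g_inj: "inj_on (gmap p q) X"
proof (rule inj_onI)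
  fix x y assume "gmap p q x = gmap p q y"
  then have "gmap p q (gmap p q x) = gmap p q (gmap p q y)" by simp
  then show "x = y" by (simp add: gg)
qed

lemma card_swap: "card {e \<in> inv_seqs n. Em p e = S \<and> Em q e = T} = card {e \<in> inv_seqs n. Em p e = T \<and> Em q e = S}"
proof -
  let ?A = "{e \<in> inv_seqs n. Em p e = S \<and> Em q e = T}"
  let ?B = "{e \<in> inv_seqs n. Em p e = T \<and> Em q e = S}"
  have "gmap p q ` ?A = ?B"
  proof
    show "gmap p q ` ?A \<subseteq> ?B"
    proof
      fix x assume "x \<in> gmap p q ` ?A"
      then obtain e where e: "e \<in> ?A" "x = gmap p q e" by blast
      then show "x \<in> ?B" using g_inv[of e n] Em_g1[of e] Em_g2[of e] by simp
    qed
    show "?B \<subseteq> gmap p q ` ?A"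
    proof
      fix e assume e: "e \<in> ?B"
      then have "gmap p q e \<in> ?A" using g_inv[of e n] Em_g1[of e] Em_g2[of e] by simp
      moreover have "e = gmap p q (gmap p q e)" by (simp add: gg)
      ultimately show "e \<in> gmap p q ` ?A" by (rule rev_image_eqI)
    qed
  qed
  then show ?thesis using card_image[OF g_inj[of ?A]] by simp
qed

lemma card_wilf: "card {e \<in> inv_seqs n. Em p e = T} = card {e \<in> inv_seqs n. Em q e = T}"
proof -
  let ?A = "{e \<in> inv_seqs n. Em p e = T}"
  let ?B = "{e \<in> inv_seqs n. Em q e = T}"
  have "gmap p q ` ?A = ?B"
  proof
    show "gmap p q ` ?A \<subseteq> ?B"
    proof
      fix x assume "x \<in> gmap p q ` ?A"
      then obtain e where e: "e \<in> ?A" "x = gmap p q e" by blast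
      then show "x \<in> ?B" using g_inv[of e n] Em_g1[of e] by simp
    qed
    show "?B \<subseteq> gmap p q ` ?A"
    proof
      fix e assume e: "e \<in> ?B"
      then have "gmap p q e \<in> ?A" using g_inv[of e n] Em_g2[of e] by simp
      moreover have "e = gmap p q (gmap p q e)" by (simp add: gg)
      ultimately show "e \<in> gmap p q ` ?A" by (rule rev_image_eqI)
    qed
  qed
  then show ?thesis using card_image[OF g_inj[of ?A]] by simp
qed

end

theorem mainTheorem2:
  fixes p q :: "nat list" and r :: nat
  assumes "is_pattern p r" and "is_pattern q r"
    and "non_overlapping p" and "non_overlapping q"
    and "mutually_non_overlapping p q"
    and "interchangeable p q"
  shows "(\<forall>n S T. S \<subseteq> {1..n} \<longrightarrow> T \<subseteq> {1..n} \<longrightarrow>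
            card {e \<in> inv_seqs n. Em p e = S \<and> Em q e = T}
          = card {e \<in> inv_seqs n. Em p e = T \<and> Em q e = S})
         \<and> super_strongly_wilf_equiv p q"
proof -
  have ch1: "changeable p q" and ch2: "changeable q p" using assms(6) by (auto simp: interchangeable_def)
  have lens: "length p = r" "length q = r" using assms(1,2) by (auto simp: is_pattern_def)
  have pne: "p \<noteq> []" using ch1 by (simp add: changeable_def)
  have qne: "q \<noteq> []" using pne lens by auto
  have hd: "hd p = hd q" and la: "last p = last q" and mx: "Max (set p) = Max (set q)"
    using ch1 by (auto simp: changeable_def)
  have sp: "set p = {0..Max (set p)}"
    using assms(1) pne by (intro down_closed) (auto simp: is_pattern_def)
  have sq: "set q = {0..Max (set q)}"
    using assms(2) qne by (intro down_closed) (auto simp: is_pattern_def)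
  have setpq: "set p = set q" using sp sq mx by simp
  have first: "q ! 0 = p ! 0" using hd pne qne by (simp add: hd_conv_nth)
  have lst: "q ! (length p - 1) = p ! (length p - 1)" using la pne qne lens by (simp add: last_conv_nth)
  interpret setting p q
    using lens pne setpq first lst assms(3,4,5) ch1 ch2 by unfold_locales auto
  show ?thesis using card_swap card_wilf by (simp add: super_strongly_wilf_equiv_def)
qed

end
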